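(* Let $d\ge1$, let $G$ be a graph with a nonedge $f=uv$, let $C$ be a clique separator of $G\cup f$, and let $G_1,\dots,G_k$ be the $C$-components of $G\cup f$ that contain both $u$ and $v$. Then $(G,f)$ has the $d$-SIP if and only if $(G_i\setminus f,f)$ has the $d$-SIP for every $i$.
   Context: A linkage $(G,\ell)$: finite simple graph $G$ and $\ell:E(G)\to\mathbb{R}_{\ge0}$ (squared lengths). A $d$-realization is $p:V(G)\to\mathbb{R}^d$ with $\|p(a)-p(b)\|^2=\ell(ab)$ for all $ab\in E(G)$; $\mathcal{C}^d(G,\ell)$ is the set of these. For a nonedge $f=uv$, $\Omega^d_f(G,\ell)=\{\|p(u)-p(v)\|^2:p\in\mathcal{C}^d(G,\ell)\}$; $(G,f)$ has the $d$-SIP if $\Omega^d_f(G,\ell)$ is convex (empty or a closed interval) for every $\ell$. $G\cup f$ adds $f$ as an edge; $H\setminus f$ deletes the edge $f$. A clique is a set of pairwise adjacent vertices; a clique separator of $H$ is a clique $C$ such that $H-C$ has at least two connected components. The $C$-components of $H$ are the subgraphs induced by $V(K)\cup C$ for the connected components $K$ of $H-C$. *)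

theory Defs
  imports "HOL-Analysis.Analysis"
begin

definition simple_graph :: "'a set \<Rightarrow> 'a set set \<Rightarrow> bool" where
  "simple_graph V E \<longleftrightarrow> finite V \<and> (\<forall>e\<in>E. \<exists>a b. a \<noteq> b \<and> a \<in> V \<and> b \<in> V \<and> e = {a, b})"

text \<open>d-realizations of a linkage (G, l) with l the squared edge lengths; the
  dimension d is the cardinality of the finite index type 'n.\<close>
definition realization :: "'a set set \<Rightarrow> ('a set \<Rightarrow> real) \<Rightarrow> ('a \<Rightarrow> real ^ 'n::finite) \<Rightarrow> bool" where
  "realization E l p \<longleftrightarrow> (\<forall>a b. {a, b} \<in> E \<longrightarrow> (norm (p a - p b))\<^sup>2 = l {a, b})"

definition Omega :: "'n::finite itself \<Rightarrow> 'a set set \<Rightarrow> ('a set \<Rightarrow> real) \<Rightarrow> 'a \<Rightarrow> 'a \<Rightarrow> real set" where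
  "Omega _ E l u v = {(norm (p u - p v))\<^sup>2 | p :: 'a \<Rightarrow> real ^ 'n. realization E l p}"

definition has_SIP :: "'n::finite itself \<Rightarrow> 'a set set \<Rightarrow> 'a \<Rightarrow> 'a \<Rightarrow> bool" where
  "has_SIP T E u v \<longleftrightarrow> (\<forall>l. (\<forall>e\<in>E. 0 \<le> l e) \<longrightarrow> convex (Omega T E l u v))"

definition clique :: "'a set set \<Rightarrow> 'a set \<Rightarrow> bool" where
  "clique E C \<longleftrightarrow> (\<forall>a\<in>C. \<forall>b\<in>C. a \<noteq> b \<longrightarrow> {a, b} \<in> E)"

definition components_minus :: "'a set \<Rightarrow> 'a set set \<Rightarrow> 'a set \<Rightarrow> 'a set set" where
  "components_minus V E C =
     {K. \<exists>x\<in>V - C. K = {y \<in> V - C.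
        (\<lambda>a b. a \<in> V - C \<and> b \<in> V - C \<and> {a, b} \<in> E)\<^sup>*\<^sup>* x y}}"

definition clique_separator :: "'a set \<Rightarrow> 'a set set \<Rightarrow> 'a set \<Rightarrow> bool" where
  "clique_separator V E C \<longleftrightarrow> C \<subseteq> V \<and> clique E C \<and> 2 \<le> card (components_minus V E C)"

definition induced_edges :: "'a set set \<Rightarrow> 'a set \<Rightarrow> 'a set set" where
  "induced_edges E W = {e \<in> E. e \<subseteq> W}"

end

theory Submission
  imports Defs
begin


lemma reflection_exists:
  fixes x1 x2 :: "'v::real_inner"
  assumes "x1 \<noteq> x2"
  shows "\<exists>R. (\<forall>y z. dist (R y) (R z) = dist y z) \<and> R x1 = x2 \<and> (\<forall>y. dist y x1 = dist y x2 \<longrightarrow> R y = y)"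
proof -
  define w where "w = x2 - x1"
  have w0: "inner w w \<noteq> 0" using assms by (simp add: w_def)
  define R where "R y = y - ((inner (y - x1) w + inner (y - x2) w) / inner w w) *\<^sub>R w" for y
  have diff: "R y - R z = (y - z) - (2 * inner (y - z) w / inner w w) *\<^sub>R w" for y z
  proof -
    have "(inner (y - x1) w + inner (y - x2) w) / inner w w - (inner (z - x1) w + inner (z - x2) w) / inner w w
        = 2 * inner (y - z) w / inner w w"
      by (simp add: inner_diff_left diff_divide_distrib[symmetric] add_divide_distrib[symmetric])
    then show ?thesis unfolding R_def by (simp add: algebra_simps scaleR_diff_left[symmetric])
  qed
  have iso: "dist (R y) (R z) = dist y z" for y z
  proof -
    have "(norm (R y - R z))\<^sup>2 = (norm (y - z))\<^sup>2"
      unfolding diff power2_norm_eq_inner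
      using w0 by (simp add: inner_diff_left inner_diff_right algebra_simps power2_eq_square field_simps inner_commute)
    then show ?thesis by (simp add: dist_norm)
  qed
  have x1: "R x1 = x2"
  proof -
    have "inner (x1 - x2) w = - inner w w" by (simp add: w_def inner_diff_left inner_diff_right inner_commute)
    then show ?thesis using w0 unfolding R_def by (simp add: w_def)
  qed
  have fx: "R y = y" if "dist y x1 = dist y x2" for y
  proof -
    have "(norm (y - x1))\<^sup>2 = (norm (y - x2))\<^sup>2" using that by (simp add: dist_norm)
    then have "inner (y - x1) (y - x1) = inner (y - x2) (y - x2)" by (simp add: power2_norm_eq_inner)
    then have "inner (y - x1) w + inner (y - x2) w = 0"
      by (simp add: w_def inner_diff_left inner_diff_right inner_commute algebra_simps)
    then show ?thesis unfolding R_def by simp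
  qed
  show ?thesis using iso x1 fx by blast
qed

lemma isometry_extend:
  fixes a b :: "'c \<Rightarrow> 'v::real_inner"
  assumes "finite S"
  shows "(\<forall>x\<in>S. \<forall>y\<in>S. dist (a x) (a y) = dist (b x) (b y)) \<Longrightarrow>
    \<exists>T. (\<forall>y z. dist (T y) (T z) = dist y z) \<and> (\<forall>x\<in>S. T (a x) = b x)"
  using assms(1)
proof (induction S rule: finite_induct)
  case empty
  show ?case by (rule exI[of _ id]) simp
next
  case (insert c S)
  then obtain T where T: "\<forall>y z. dist (T y) (T z) = dist y z" "\<forall>x\<in>S. T (a x) = b x" by auto
  show ?case
  proof (cases "T (a c) = b c")
    case True then show ?thesis using T by (intro exI[of _ T]) auto
  next
    case False
    then obtain R where R: "\<forall>y z. dist (R y) (R z) = dist y z" "R (T (a c)) = b c"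
      "\<forall>y. dist y (T (a c)) = dist y (b c) \<longrightarrow> R y = y"
      using reflection_exists by blast
    have "R (b x) = b x" if "x \<in> S" for x
    proof -
      have "dist (b x) (T (a c)) = dist (b x) (b c)"
        using T that insert.prems by (metis insertCI)
      then show ?thesis using R by blast
    qed
    then show ?thesis using T R by (intro exI[of _ "R \<circ> T"]) auto
  qed
qed

lemma comp_sub: "K \<in> components_minus V H C \<Longrightarrow> K \<subseteq> V - C"
  unfolding components_minus_def by blast

lemma comp_edge:
  assumes "K \<in> components_minus V H C" "b \<in> K" "{b, a} \<in> H" "a \<in> V"
  shows "a \<in> K \<union> C"
proof (cases "a \<in> C")
  case False
  let ?R = "\<lambda>a b. a \<in> V - C \<and> b \<in> V - C \<and> {a, b} \<in> H"
  from assms(1) obtain x where x: "x \<in> V - C" and K: "K = {y \<in> V - C. ?R\<^sup>*\<^sup>* x y}"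
    unfolding components_minus_def by blast
  have xb: "?R\<^sup>*\<^sup>* x b" "b \<in> V - C" using assms(2) K by blast+
  have "?R b a" using xb(2) assms(3,4) False by blast
  with xb(1) have "?R\<^sup>*\<^sup>* x a" by (rule rtranclp.rtrancl_into_rtrancl)
  then have "a \<in> K" using K False assms(4) by blast
  then show ?thesis by blast
qed simp

lemma comp_exists:
  assumes "x \<in> V - C" shows "\<exists>K\<in>components_minus V H C. x \<in> K"
proof -
  let ?R = "\<lambda>a b. a \<in> V - C \<and> b \<in> V - C \<and> {a, b} \<in> H"
  let ?K = "{y \<in> V - C. ?R\<^sup>*\<^sup>* x y}"
  have "?K \<in> components_minus V H C" unfolding components_minus_def
    by (rule CollectI, rule bexI[of _ x], rule refl, rule assms)
  moreover have "x \<in> ?K" by (rule CollectI, rule conjI, rule assms, rule rtranclp.rtrancl_refl)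
  ultimately show ?thesis by (rule bexI[rotated])
qed

lemma comp_unique:
  assumes "K \<in> components_minus V H C" "K' \<in> components_minus V H C" "y \<in> K" "y \<in> K'"
  shows "K = K'"
proof -
  let ?R = "\<lambda>a b. a \<in> V - C \<and> b \<in> V - C \<and> {a, b} \<in> H"
  have sy: "symp ?R" unfolding symp_def by (simp add: insert_commute)
  have sym: "?R\<^sup>*\<^sup>* a b \<Longrightarrow> ?R\<^sup>*\<^sup>* b a" for a b using sympD[OF symp_rtranclp[OF sy]] by blast
  have key: "K = {z \<in> V - C. ?R\<^sup>*\<^sup>* y z}" if "K \<in> components_minus V H C" "y \<in> K" for K
  proof -
    from that(1) obtain x where K: "K = {y \<in> V - C. ?R\<^sup>*\<^sup>* x y}"
      unfolding components_minus_def by blast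
    with that(2) have xy: "?R\<^sup>*\<^sup>* x y" by blast
    show ?thesis
    proof (intro set_eqI iffI)
      fix z assume "z \<in> K"
      then have "?R\<^sup>*\<^sup>* x z" "z \<in> V - C" unfolding K by blast+
      then show "z \<in> {z \<in> V - C. ?R\<^sup>*\<^sup>* y z}" using sym[OF xy] rtranclp_trans[of ?R y x z] by blast
    next
      fix z assume "z \<in> {z \<in> V - C. ?R\<^sup>*\<^sup>* y z}"
      then have "?R\<^sup>*\<^sup>* y z" "z \<in> V - C" by blast+
      then show "z \<in> K" unfolding K using xy rtranclp_trans[of ?R x y z] by blast
    qed
  qed
  show ?thesis using key[OF assms(1,3)] key[OF assms(2,4)] by simp
qed

lemma convexI_real:
  assumes "\<And>t1 t3 t. t1 \<in> S \<Longrightarrow> t3 \<in> S \<Longrightarrow> t1 \<le> t \<Longrightarrow> t \<le> t3 \<Longrightarrow> t \<in> S"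
  shows "convex (S::real set)"
  using assms unfolding is_interval_convex_1[symmetric] is_interval_1 by blast

lemma convexD_real:
  assumes "convex (S::real set)" "t1 \<in> S" "t3 \<in> S" "t1 \<le> t" "t \<le> t3" shows "t \<in> S"
  using assms unfolding is_interval_convex_1[symmetric] is_interval_1 by blast

lemma point_exists:
  fixes x y e0 :: "'v::real_normed_vector"
  assumes "norm e0 = 1" "0 \<le> a"
  shows "\<exists>X. norm (X - x) = a \<and> norm (X - y) = \<bar>a - norm (y - x)\<bar>"
proof (cases "y = x")
  case True
  then show ?thesis using assms by (intro exI[of _ "x + a *\<^sub>R e0"]) simp
next
  case False
  define n where "n = norm (y - x)"
  have n: "n > 0" using False by (simp add: n_def)
  define X where "X = x + (a / n) *\<^sub>R (y - x)"
  have "X - y = (a / n - 1) *\<^sub>R (y - x)" by (simp add: X_def algebra_simps)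
  then have "norm (X - y) = \<bar>a / n - 1\<bar> * n" by (simp add: n_def)
  also have "\<dots> = \<bar>(a / n - 1) * n\<bar>" using n by (simp add: abs_mult)
  also have "\<dots> = \<bar>a - n\<bar>" using n by (simp add: left_diff_distrib)
  finally have 1: "norm (X - y) = \<bar>a - n\<bar>" .
  have 2: "norm (X - x) = a" using n assms(2) by (simp add: X_def n_def)
  show ?thesis using 1 2 unfolding n_def by blast
qed

lemma Omega_iff: "t \<in> Omega TYPE('n::finite) E l u v \<longleftrightarrow>
   (\<exists>p :: 'a \<Rightarrow> real ^ 'n. realization E l p \<and> t = (norm (p u - p v))\<^sup>2)"
  unfolding Omega_def by auto

lemma realizationD: "realization E l p \<Longrightarrow> {a, b} \<in> E \<Longrightarrow> (norm (p a - p b))\<^sup>2 = l {a, b}"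
  unfolding realization_def by blast

lemma simple_edge: "simple_graph V E \<Longrightarrow> e \<in> E \<Longrightarrow> \<exists>a b. a \<noteq> b \<and> a \<in> V \<and> b \<in> V \<and> e = {a, b}"
  unfolding simple_graph_def by blast


lemma forward:
  fixes V :: "'a set" and E :: "'a set set" and u v :: 'a and C K :: "'a set"
  assumes simple: "simple_graph V E"
    and uV: "u \<in> V" and vV: "v \<in> V" and uvE: "{u, v} \<notin> E"
    and cl: "clique (insert {u, v} E) C"
    and K: "K \<in> components_minus V (insert {u, v} E) C"
    and uK: "u \<in> K \<union> C" and vK: "v \<in> K \<union> C"
    and sip: "has_SIP TYPE('n::finite) E u v"
  shows "has_SIP TYPE('n) (induced_edges (insert {u, v} E) (K \<union> C) - {{u, v}}) u v"
  unfolding has_SIP_def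
proof (intro allI impI)
  let ?H = "insert {u, v} E"
  define EK where "EK = induced_edges ?H (K \<union> C) - {{u, v}}"
  fix li :: "'a set \<Rightarrow> real"
  assume li0: "\<forall>e\<in>induced_edges ?H (K \<union> C) - {{u, v}}. 0 \<le> li e"
  then have li0': "\<forall>e\<in>EK. 0 \<le> li e" by (simp add: EK_def)
  have EKiff: "e \<in> EK \<longleftrightarrow> e \<in> ?H \<and> e \<subseteq> K \<union> C \<and> e \<noteq> {u, v}" for e
    by (auto simp: EK_def induced_edges_def)
  show "convex (Omega TYPE('n) (induced_edges ?H (K \<union> C) - {{u, v}}) li u v)"
    unfolding EK_def[symmetric]
  proof (rule convexI_real)
    fix t1 t3 t
    assume "t1 \<in> Omega TYPE('n) EK li u v" "t3 \<in> Omega TYPE('n) EK li u v" and tt: "t1 \<le> t" "t \<le> t3"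
    then obtain p1 p3 :: "'a \<Rightarrow> real ^ 'n" where p1: "realization EK li p1" "t1 = (norm (p1 u - p1 v))\<^sup>2"
      and p3: "realization EK li p3" "t3 = (norm (p3 u - p3 v))\<^sup>2"
      unfolding Omega_iff by blast
    have s1: "sqrt t1 = norm (p1 v - p1 u)" using p1(2) by (simp add: norm_minus_commute)
    have s3: "sqrt t3 = norm (p3 v - p3 u)" using p3(2) by (simp add: norm_minus_commute)
    have s13: "sqrt t1 \<le> sqrt t3" using tt by simp
    have s10: "0 \<le> sqrt t1" using p1(2) by simp
    obtain X1 X3 where P: "\<forall>c\<in>C. norm (X1 - p1 c) = norm (X3 - p3 c)"
    proof (cases "\<exists>w\<in>C. w \<noteq> u \<and> w \<noteq> v")
      case True
      then obtain w where w: "w \<in> C" "w \<noteq> u" "w \<noteq> v" by blast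
      have "norm (p1 w - p1 c) = norm (p3 w - p3 c)" if c: "c \<in> C" for c
      proof (cases "c = w")
        case False
        have "{w, c} \<in> EK" unfolding EKiff using cl w c False
          by (auto simp: clique_def doubleton_eq_iff)
        then have "(norm (p1 w - p1 c))\<^sup>2 = (norm (p3 w - p3 c))\<^sup>2"
          using realizationD[OF p1(1)] realizationD[OF p3(1)] by metis
        then show ?thesis by (simp add: power2_eq_iff_nonneg)
      qed simp
      then show ?thesis by (intro that[of "p1 w" "p3 w"]) blast
    next
      case False
      then have Cuv: "C \<subseteq> {u, v}" by blast
      define a where "a = (sqrt t1 + sqrt t3) / 2"
      have a0: "0 \<le> a" using s10 s13 by (simp add: a_def)
      obtain X1 where X1: "norm (X1 - p1 u) = a" "norm (X1 - p1 v) = \<bar>a - sqrt t1\<bar>"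
        using point_exists[OF norm_axis_1 a0] s1 by metis
      obtain X3 where X3: "norm (X3 - p3 u) = a" "norm (X3 - p3 v) = \<bar>a - sqrt t3\<bar>"
        using point_exists[OF norm_axis_1 a0] s3 by metis
      have "\<bar>a - sqrt t1\<bar> = \<bar>a - sqrt t3\<bar>" using s13 by (simp add: a_def field_simps)
      then show ?thesis using Cuv X1 X3 by (intro that[of X1 X3]) auto
    qed
    define W where "W = V - (K \<union> C)"
    define q1 where "q1 x = (if x \<in> W then X1 else p1 x)" for x
    define q3 where "q3 x = (if x \<in> W then X3 else p3 x)" for x
    define l where "l e = (if e \<subseteq> K \<union> C then li e else
       (SOME r. \<exists>a b. e = {a, b} \<and> r = (norm (q1 a - q1 b))\<^sup>2))" for e
    have lout: "l {a, b} = (norm (q1 a - q1 b))\<^sup>2" if "\<not> {a, b} \<subseteq> K \<union> C" for a b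
    proof -
      have "(SOME r. \<exists>a' b'. {a, b} = {a', b'} \<and> r = (norm (q1 a' - q1 b'))\<^sup>2) = (norm (q1 a - q1 b))\<^sup>2"
        by (rule someI2[of _ "(norm (q1 a - q1 b))\<^sup>2"]) (auto simp: doubleton_eq_iff norm_minus_commute)
      then show ?thesis unfolding l_def if_not_P[OF that] .
    qed
    have key: "norm (q3 a - q3 b) = norm (q1 a - q1 b)"
      if e: "{a, b} \<in> E" "\<not> {a, b} \<subseteq> K \<union> C" for a b
    proof -
      have ab: "a \<in> V" "b \<in> V" using simple_edge[OF simple e(1)] by (auto simp: doubleton_eq_iff)
      have Hab: "{a, b} \<in> ?H" "{b, a} \<in> ?H" using e(1) by (auto simp: insert_commute)
      show ?thesis
      proof (cases "a \<in> K \<union> C")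
        case True
        then have bW: "b \<in> W" using e ab by (auto simp: W_def)
        have "a \<in> C" using True comp_edge[OF K _ Hab(1) ab(2)] bW by (auto simp: W_def)
        then have "a \<notin> W" by (auto simp: W_def)
        then show ?thesis using bW P \<open>a \<in> C\<close> by (simp add: q1_def q3_def norm_minus_commute)
      next
        case False
        then have aW: "a \<in> W" using ab by (auto simp: W_def)
        show ?thesis
        proof (cases "b \<in> W")
          case True then show ?thesis using aW by (simp add: q1_def q3_def)
        next
          case False
          then have "b \<in> K \<union> C" using ab by (auto simp: W_def)
          then have "b \<in> C" using comp_edge[OF K _ Hab(2) ab(1)] aW by (auto simp: W_def)
          then show ?thesis using aW False P by (simp add: q1_def q3_def)
        qed
      qed
    qed
    have real1: "realization E l q1" and real3: "realization E l q3"
      unfolding realization_def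
    proof (safe)
      fix a b assume e: "{a, b} \<in> E"
      show "(norm (q1 a - q1 b))\<^sup>2 = l {a, b}"
      proof (cases "{a, b} \<subseteq> K \<union> C")
        case True
        then have "{a, b} \<in> EK" using e uvE by (auto simp: EKiff)
        moreover have "a \<notin> W" "b \<notin> W" using True by (auto simp: W_def)
        ultimately show ?thesis using True realizationD[OF p1(1)] by (simp add: q1_def l_def)
      qed (simp add: lout)
      show "(norm (q3 a - q3 b))\<^sup>2 = l {a, b}"
      proof (cases "{a, b} \<subseteq> K \<union> C")
        case True
        then have "{a, b} \<in> EK" using e uvE by (auto simp: EKiff)
        moreover have "a \<notin> W" "b \<notin> W" using True by (auto simp: W_def)
        ultimately show ?thesis using True realizationD[OF p3(1)] by (simp add: q3_def l_def)
      qed (simp add: lout key[OF e])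
    qed
    have l0: "\<forall>e\<in>E. 0 \<le> l e"
    proof
      fix e assume e: "e \<in> E"
      then obtain a b where ab: "e = {a, b}" using simple_edge[OF simple] by blast
      show "0 \<le> l e"
      proof (cases "e \<subseteq> K \<union> C")
        case True
        then have "e \<in> EK" using e uvE by (auto simp: EKiff)
        then show ?thesis using li0' True by (simp add: l_def)
      qed (simp add: ab lout)
    qed
    have uW: "u \<notin> W" "v \<notin> W" using uK vK by (auto simp: W_def)
    have "t1 \<in> Omega TYPE('n) E l u v" unfolding Omega_iff
      using real1 p1(2) uW by (intro exI[of _ q1]) (simp add: q1_def)
    moreover have "t3 \<in> Omega TYPE('n) E l u v" unfolding Omega_iff
      using real3 p3(2) uW by (intro exI[of _ q3]) (simp add: q3_def)
    moreover have "convex (Omega TYPE('n) E l u v)" using sip l0 unfolding has_SIP_def by blast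
    ultimately have "t \<in> Omega TYPE('n) E l u v" using convexD_real tt by blast
    then obtain r :: "'a \<Rightarrow> real ^ 'n" where r: "realization E l r" "t = (norm (r u - r v))\<^sup>2"
      unfolding Omega_iff by blast
    have "realization EK li r" unfolding realization_def
    proof (intro allI impI)
      fix a b assume "{a, b} \<in> EK"
      then have "{a, b} \<in> E" "{a, b} \<subseteq> K \<union> C" by (auto simp: EKiff)
      then show "(norm (r a - r b))\<^sup>2 = li {a, b}" using realizationD[OF r(1)] by (simp add: l_def)
    qed
    then show "t \<in> Omega TYPE('n) EK li u v" unfolding Omega_iff using r(2) by blast
  qed
qed



lemma realization_mono: "realization E2 l p \<Longrightarrow> E1 \<subseteq> E2 \<Longrightarrow> realization E1 l p"
  unfolding realization_def by blast

lemma backward: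
  fixes V :: "'a set" and E :: "'a set set" and u v :: 'a and C :: "'a set"
  assumes simple: "simple_graph V E"
    and uV: "u \<in> V" and vV: "v \<in> V" and uvE: "{u, v} \<notin> E"
    and cl: "clique (insert {u, v} E) C" and CV: "C \<subseteq> V"
    and ne: "components_minus V (insert {u, v} E) C \<noteq> {}"
    and sips: "\<forall>K \<in> components_minus V (insert {u, v} E) C.
       u \<in> K \<union> C \<and> v \<in> K \<union> C \<longrightarrow>
       has_SIP TYPE('n::finite) (induced_edges (insert {u, v} E) (K \<union> C) - {{u, v}}) u v"
  shows "has_SIP TYPE('n) E u v"
  unfolding has_SIP_def
proof (intro allI impI)
  let ?H = "insert {u, v} E"
  let ?Cs = "components_minus V ?H C"
  let ?EK = "\<lambda>K. induced_edges ?H (K \<union> C) - {{u, v}}"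
  have EKE: "?EK K \<subseteq> E" for K unfolding induced_edges_def by blast
  have IE: "induced_edges E (K \<union> C) \<subseteq> ?EK K" for K using uvE unfolding induced_edges_def by blast
  fix l :: "'a set \<Rightarrow> real"
  assume l0: "\<forall>e\<in>E. 0 \<le> l e"
  show "convex (Omega TYPE('n) E l u v)"
  proof (rule convexI_real)
    fix t1 t3 t
    assume "t1 \<in> Omega TYPE('n) E l u v" "t3 \<in> Omega TYPE('n) E l u v" and tt: "t1 \<le> t" "t \<le> t3"
    then obtain p1 p3 :: "'a \<Rightarrow> real ^ 'n" where p1: "realization E l p1" "t1 = (norm (p1 u - p1 v))\<^sup>2"
      and p3: "realization E l p3" "t3 = (norm (p3 u - p3 v))\<^sup>2"
      unfolding Omega_iff by blast
    have "\<forall>K\<in>?Cs. \<exists>r :: 'a \<Rightarrow> real ^ 'n. realization (induced_edges E (K \<union> C)) l r \<and>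
       (u \<in> K \<union> C \<and> v \<in> K \<union> C \<longrightarrow> (norm (r u - r v))\<^sup>2 = t)"
    proof
      fix K assume K: "K \<in> ?Cs"
      show "\<exists>r :: 'a \<Rightarrow> real ^ 'n. realization (induced_edges E (K \<union> C)) l r \<and>
       (u \<in> K \<union> C \<and> v \<in> K \<union> C \<longrightarrow> (norm (r u - r v))\<^sup>2 = t)"
      proof (cases "u \<in> K \<union> C \<and> v \<in> K \<union> C")
        case True
        have sipK: "has_SIP TYPE('n) (?EK K) u v" using mp[OF bspec[OF sips K] True] .
        have lK: "\<forall>e\<in>?EK K. 0 \<le> l e"
        proof
          fix e assume "e \<in> ?EK K"
          then have "e \<in> E" using EKE[of K] by (rule subsetD[rotated])
          then show "0 \<le> l e" using l0 by (rule bspec[rotated])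
        qed
        have cv: "convex (Omega TYPE('n) (?EK K) l u v)"
          by (rule sipK[unfolded has_SIP_def, rule_format]) (use lK in blast)
        have "t1 \<in> Omega TYPE('n) (?EK K) l u v" unfolding Omega_iff
          by (rule exI[of _ p1], rule conjI[OF realization_mono[OF p1(1) EKE] p1(2)])
        moreover have "t3 \<in> Omega TYPE('n) (?EK K) l u v" unfolding Omega_iff
          by (rule exI[of _ p3], rule conjI[OF realization_mono[OF p3(1) EKE] p3(2)])
        ultimately have "t \<in> Omega TYPE('n) (?EK K) l u v" by (rule convexD_real[OF cv _ _ tt(1) tt(2)])
        then obtain r :: "'a \<Rightarrow> real ^ 'n" where hr: "realization (?EK K) l r" "t = (norm (r u - r v))\<^sup>2"
          unfolding Omega_iff by blast
        show ?thesis
          by (rule exI[of _ r], rule conjI[OF realization_mono[OF hr(1) IE]], rule impI, rule hr(2)[symmetric])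
      next
        case False
        have sub: "induced_edges E (K \<union> C) \<subseteq> E" unfolding induced_edges_def by blast
        show ?thesis
          by (rule exI[of _ p1], rule conjI[OF realization_mono[OF p1(1) sub]], rule impI, use False in blast)
      qed
    qed
    from bchoice[OF this] obtain r :: "'a set \<Rightarrow> 'a \<Rightarrow> real ^ 'n" where r0:
      "\<forall>K\<in>?Cs. realization (induced_edges E (K \<union> C)) l (r K) \<and>
       (u \<in> K \<union> C \<and> v \<in> K \<union> C \<longrightarrow> (norm (r K u - r K v))\<^sup>2 = t)" by (elim exE)
    have r: "\<And>K. K \<in> ?Cs \<Longrightarrow> realization (induced_edges E (K \<union> C)) l (r K)"
      "\<And>K. K \<in> ?Cs \<Longrightarrow> u \<in> K \<union> C \<Longrightarrow> v \<in> K \<union> C \<Longrightarrow> (norm (r K u - r K v))\<^sup>2 = t"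
      using r0 by blast+
    have HuvV: "{u, v} \<in> ?H" by simp
    obtain K0 where K0: "K0 \<in> ?Cs" "u \<in> K0 \<union> C" "v \<in> K0 \<union> C"
    proof (cases "u \<in> C")
      case True
      show ?thesis
      proof (cases "v \<in> C")
        case True
        then show ?thesis using \<open>u \<in> C\<close> ne that by blast
      next
        case False
        then obtain K where "K \<in> ?Cs" "v \<in> K" using comp_exists[of v V C ?H] vV by blast
        then show ?thesis using \<open>u \<in> C\<close> that by blast
      qed
    next
      case False
      then obtain K where K: "K \<in> ?Cs" "u \<in> K" using comp_exists[of u V C ?H] uV by blast
      then have "v \<in> K \<union> C" using comp_edge[OF K(1) K(2) HuvV vV] by blast
      then show ?thesis using K that by blast
    qed
    define base where "base = r K0"
    have "\<forall>K\<in>?Cs. \<exists>T :: real ^ 'n \<Rightarrow> real ^ 'n. (\<forall>y z. dist (T y) (T z) = dist y z) \<and> (\<forall>c\<in>C. T (r K c) = base c)"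
    proof
      fix K assume K: "K \<in> ?Cs"
      have fC: "finite C" using CV simple finite_subset by (auto simp: simple_graph_def)
      show "\<exists>T :: real ^ 'n \<Rightarrow> real ^ 'n. (\<forall>y z. dist (T y) (T z) = dist y z) \<and> (\<forall>c\<in>C. T (r K c) = base c)"
      proof (rule isometry_extend[OF fC], intro ballI)
        fix c c' assume c: "c \<in> C" "c' \<in> C"
        show "dist (r K c) (r K c') = dist (base c) (base c')"
        proof (cases "c = c'")
          case False
          then have ccH: "{c, c'} \<in> ?H" using cl c by (auto simp: clique_def)
          have "(norm (r K c - r K c'))\<^sup>2 = (norm (base c - base c'))\<^sup>2"
          proof (cases "{c, c'} = {u, v}")
            case True
            then have "u \<in> C" "v \<in> C" using c by (auto simp: doubleton_eq_iff)
            then have "(norm (r K u - r K v))\<^sup>2 = t" "(norm (base u - base v))\<^sup>2 = t"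
              using r(2)[OF K] r(2)[OF K0(1)] by (auto simp: base_def)
            then show ?thesis using True by (auto simp: doubleton_eq_iff norm_minus_commute)
          next
            case False
            then have "{c, c'} \<in> induced_edges E (K \<union> C)" "{c, c'} \<in> induced_edges E (K0 \<union> C)"
              using ccH c by (auto simp: induced_edges_def)
            then show ?thesis using realizationD[OF r(1)[OF K]] realizationD[OF r(1)[OF K0(1)]]
              by (simp add: base_def)
          qed
          then show ?thesis by (simp add: dist_norm power2_eq_iff_nonneg)
        qed simp
      qed
    qed
    from bchoice[OF this] obtain T :: "'a set \<Rightarrow> real ^ 'n \<Rightarrow> real ^ 'n" where T0:
      "\<forall>K\<in>?Cs. (\<forall>y z. dist (T K y) (T K z) = dist y z) \<and> (\<forall>c\<in>C. T K (r K c) = base c)"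
      by (elim exE)
    have T: "\<And>K y z. K \<in> ?Cs \<Longrightarrow> dist (T K y) (T K z) = dist y z"
      "\<And>K c. K \<in> ?Cs \<Longrightarrow> c \<in> C \<Longrightarrow> T K (r K c) = base c"
      using T0 by blast+
    define cp where "cp x = (SOME K. K \<in> ?Cs \<and> x \<in> K)" for x
    define q where "q x = (if x \<in> V - C then T (cp x) (r (cp x) x) else base x)" for x
    have qK: "q x = T K (r K x)" if K: "K \<in> ?Cs" and x: "x \<in> K \<union> C" for K x
    proof (cases "x \<in> C")
      case True then show ?thesis using T(2)[OF K True] by (simp add: q_def)
    next
      case False
      then have xK: "x \<in> K" using x by blast
      then have xVC: "x \<in> V - C" using comp_sub[OF K] by blast
      have "cp x = K" unfolding cp_def
      proof (rule someI2[of _ K])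
        show "K \<in> ?Cs \<and> x \<in> K" using K xK by (rule conjI)
      next
        fix K' assume K': "K' \<in> ?Cs \<and> x \<in> K'"
        show "K' = K" using comp_unique[OF conjunct1[OF K'] K conjunct2[OF K'] xK] .
      qed
      then show ?thesis using xVC by (simp add: q_def)
    qed
    have "realization E l q" unfolding realization_def
    proof (intro allI impI)
      fix a b assume e: "{a, b} \<in> E"
      have ab: "a \<in> V" "b \<in> V" using simple_edge[OF simple e] by (auto simp: doubleton_eq_iff)
      have Hab: "{a, b} \<in> ?H" "{b, a} \<in> ?H" using e by (auto simp: insert_commute)
      obtain K where K: "K \<in> ?Cs" "a \<in> K \<union> C" "b \<in> K \<union> C"
      proof (cases "a \<in> C")
        case True
        show ?thesis
        proof (cases "b \<in> C")
          case True then show ?thesis using \<open>a \<in> C\<close> K0(1) that by blast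
        next
          case False
          then obtain K where K: "K \<in> ?Cs" "b \<in> K" using comp_exists[of b V C ?H] ab by blast
          then show ?thesis using \<open>a \<in> C\<close> that by blast
        qed
      next
        case False
        then obtain K where K: "K \<in> ?Cs" "a \<in> K" using comp_exists[of a V C ?H] ab by blast
        then have "b \<in> K \<union> C" using comp_edge[OF K(1) K(2) Hab(1) ab(2)] by blast
        then show ?thesis using K that by blast
      qed
      have "norm (q a - q b) = norm (r K a - r K b)"
        using qK[OF K(1,2)] qK[OF K(1,3)] T(1)[OF K(1)] by (simp add: dist_norm)
      moreover have "{a, b} \<in> induced_edges E (K \<union> C)" using e K by (auto simp: induced_edges_def)
      ultimately show "(norm (q a - q b))\<^sup>2 = l {a, b}" using realizationD[OF r(1)[OF K(1)]] by simp
    qed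
    moreover have "(norm (q u - q v))\<^sup>2 = t"
      using qK[OF K0(1,2)] qK[OF K0(1,3)] T(1)[OF K0(1)] r(2)[OF K0] by (simp add: dist_norm)
    ultimately show "t \<in> Omega TYPE('n) E l u v" unfolding Omega_iff by (intro exI[of _ q]) simp
  qed
qed

theorem mainTheorem8:
  fixes V :: "'a set" and E :: "'a set set" and u v :: 'a and C :: "'a set"
  assumes "simple_graph V E"
    and "u \<in> V" and "v \<in> V" and "u \<noteq> v" and "{u, v} \<notin> E"
    and "clique_separator V (insert {u, v} E) C"
  shows "has_SIP TYPE('n::finite) E u v \<longleftrightarrow>
    (\<forall>K \<in> components_minus V (insert {u, v} E) C.
       u \<in> K \<union> C \<and> v \<in> K \<union> C \<longrightarrow>
       has_SIP TYPE('n) (induced_edges (insert {u, v} E) (K \<union> C) - {{u, v}}) u v)"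
proof -
  have cl: "clique (insert {u, v} E) C" and CV: "C \<subseteq> V"
    and c2: "2 \<le> card (components_minus V (insert {u, v} E) C)"
    using assms(6) unfolding clique_separator_def by blast+
  have ne: "components_minus V (insert {u, v} E) C \<noteq> {}"
  proof
    assume "components_minus V (insert {u, v} E) C = {}"
    with c2 show False by simp
  qed
  show ?thesis
  proof
    assume "has_SIP TYPE('n::finite) E u v"
    then show "\<forall>K \<in> components_minus V (insert {u, v} E) C.
       u \<in> K \<union> C \<and> v \<in> K \<union> C \<longrightarrow>
       has_SIP TYPE('n) (induced_edges (insert {u, v} E) (K \<union> C) - {{u, v}}) u v"
    proof (intro ballI impI)
      fix K assume K: "K \<in> components_minus V (insert {u, v} E) C" and uvK: "u \<in> K \<union> C \<and> v \<in> K \<union> C"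
      show "has_SIP TYPE('n) (induced_edges (insert {u, v} E) (K \<union> C) - {{u, v}}) u v"
        using uvK forward[OF assms(1,2,3,5) cl K _ _ \<open>has_SIP TYPE('n::finite) E u v\<close>] by simp
    qed
  next
    assume "\<forall>K \<in> components_minus V (insert {u, v} E) C.
       u \<in> K \<union> C \<and> v \<in> K \<union> C \<longrightarrow>
       has_SIP TYPE('n) (induced_edges (insert {u, v} E) (K \<union> C) - {{u, v}}) u v"
    then show "has_SIP TYPE('n::finite) E u v"
      by (rule backward[OF assms(1,2,3,5) cl CV ne])
  qed
qed


end
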